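(* Let $\tau>0$, $\delta>0$ and $\kappa\in(0,1)$, and let $H':\mathbb{R}\to\mathbb{R}$ be the trilinear function $$H'(x)=\begin{cases} x+1 & x\le -\kappa,\\ -\frac{1-\kappa}{\kappa}\,x & -\kappa\le x\le \kappa,\\ x-1 & x\ge \kappa.\end{cases}$$ Consider the equation $$\tau\,\partial_t x(t,p)=\sigma(t)+\delta\,(p-\tfrac12)-H'\big(x(t,p)\big).\qquad (\ast)$$ Then $(\ast)$ admits two families of traveling wave solutions, left moving ($\Omega<0$) and right moving ($\Omega>0$), of the form $$x_{\mathrm{TW}}(t,p)=X(P),\qquad P=p-\Omega t,\qquad \sigma_{\mathrm{TW}}(t)=\Sigma-\delta\,(\Omega t-\tfrac12),$$ which are strictly increasing with respect to $p$. They are given as follows, for real numbers $\Xi_-<\Xi_+$. For $\Omega<0$: $X=X_L$ and $\Sigma=\Sigma_L$, where $$X_L(P)=\begin{cases}-\kappa+\delta(P-\Xi_-) & P\le \Xi_-,\\[2pt] -\kappa-\dfrac{\kappa\delta}{1-\kappa}(P-\Xi_-)-\dfrac{\kappa\tau\Omega\delta}{(1-\kappa)^2}\Big(\exp\Big(-\dfrac{1-\kappa}{\kappa\tau\Omega}(P-\Xi_-)\Big)-1\Big) & \Xi_-\le P\le \Xi_+,\\[2pt] \kappa+\delta(P-\Xi_+)+\big(2(1-\kappa)+\delta(\Xi_+-\Xi_-)\big)\Big(1-\exp\Big(\dfrac{P-\Xi_+}{\tau\Omega}\Big)\Big) & \Xi_+\le P,\end{cases}$$ $$\Sigma_L=1-\kappa-\tau\Omega\delta-\delta\,\Xi_-.$$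 For $\Omega>0$: $X=X_R$ and $\Sigma=\Sigma_R$, where $$X_R(P)=\begin{cases}-\kappa+\delta(P-\Xi_-)+\big(2(1-\kappa)+\delta(\Xi_+-\Xi_-)\big)\Big(-1+\exp\Big(\dfrac{P-\Xi_-}{\tau\Omega}\Big)\Big) & P\le \Xi_-,\\[2pt] \kappa-\dfrac{\kappa\delta}{1-\kappa}(P-\Xi_+)-\dfrac{\kappa\tau\Omega\delta}{(1-\kappa)^2}\Big(\exp\Big(-\dfrac{1-\kappa}{\kappa\tau\Omega}(P-\Xi_+)\Big)-1\Big) & \Xi_-\le P\le \Xi_+,\\[2pt] \kappa+\delta(P-\Xi_+) & \Xi_+\le P,\end{cases}$$ $$\Sigma_R=-1+\kappa-\tau\Omega\delta-\delta\,\Xi_+.$$ In both cases this holds provided that the transcendental equation $$\frac{2(1-\kappa)^2}{\tau|\Omega|\delta}+\frac{1-\kappa}{\tau|\Omega|}\,(\Xi_+-\Xi_-)=\exp\Big(\frac{1-\kappa}{\kappa\tau|\Omega|}(\Xi_+-\Xi_-)\Big)-1$$ is satisfied. In particular, the wave speed $\Omega$ can be regarded as the independent parameter: it determines the interface width $\Xi_+-\Xi_-$ but not the interface position $\tfrac12(\Xi_-+\Xi_+)$.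
   Context: The equation $(\ast)$ is considered here with the index variable $p$ ranging over $\mathbb{R}$ and the function $\sigma$ prescribed as stated; no integral (mean-field) constraint is imposed on the solution. The parameter $\tau>0$ is a relaxation time, $\delta>0$ is the strength of a linear disorder function $\theta(p)=\delta(p-\tfrac12)$, and $[-\kappa,\kappa]$ is the spinodal region of $H'$. For the traveling waves, $X(P)<-\kappa$ for $P<\Xi_-$, $X(P)\in(-\kappa,\kappa)$ for $\Xi_-<P<\Xi_+$, and $X(P)>\kappa$ for $P>\Xi_+$. *)

theory Defs
  imports "HOL-Analysis.Analysis"
begin

definition Hprime :: "real \<Rightarrow> real \<Rightarrow> real" where
  "Hprime \<kappa> x = (if x \<le> -\<kappa> then x + 1
                   else if x \<le> \<kappa> then - ((1 - \<kappa>) / \<kappa>) * x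
                   else x - 1)"

definition X_L :: "real \<Rightarrow> real \<Rightarrow> real \<Rightarrow> real \<Rightarrow> real \<Rightarrow> real \<Rightarrow> real \<Rightarrow> real" where
  "X_L \<tau> \<delta> \<kappa> \<Omega> \<Xi>m \<Xi>p P =
    (if P \<le> \<Xi>m then - \<kappa> + \<delta> * (P - \<Xi>m)
     else if P \<le> \<Xi>p then
       - \<kappa> - (\<kappa> * \<delta> / (1 - \<kappa>)) * (P - \<Xi>m)
         - (\<kappa> * \<tau> * \<Omega> * \<delta> / (1 - \<kappa>)\<^sup>2)
           * (exp (- ((1 - \<kappa>) / (\<kappa> * \<tau> * \<Omega>)) * (P - \<Xi>m)) - 1)
     else \<kappa> + \<delta> * (P - \<Xi>p)
       + (2 * (1 - \<kappa>) + \<delta> * (\<Xi>p - \<Xi>m)) * (1 - exp ((P - \<Xi>p) / (\<tau> * \<Omega>))))"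

definition Sigma_L :: "real \<Rightarrow> real \<Rightarrow> real \<Rightarrow> real \<Rightarrow> real \<Rightarrow> real" where
  "Sigma_L \<tau> \<delta> \<kappa> \<Omega> \<Xi>m = 1 - \<kappa> - \<tau> * \<Omega> * \<delta> - \<delta> * \<Xi>m"

definition X_R :: "real \<Rightarrow> real \<Rightarrow> real \<Rightarrow> real \<Rightarrow> real \<Rightarrow> real \<Rightarrow> real \<Rightarrow> real" where
  "X_R \<tau> \<delta> \<kappa> \<Omega> \<Xi>m \<Xi>p P =
    (if P \<le> \<Xi>m then - \<kappa> + \<delta> * (P - \<Xi>m)
       + (2 * (1 - \<kappa>) + \<delta> * (\<Xi>p - \<Xi>m)) * (-1 + exp ((P - \<Xi>m) / (\<tau> * \<Omega>)))
     else if P \<le> \<Xi>p then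
       \<kappa> - (\<kappa> * \<delta> / (1 - \<kappa>)) * (P - \<Xi>p)
         - (\<kappa> * \<tau> * \<Omega> * \<delta> / (1 - \<kappa>)\<^sup>2)
           * (exp (- ((1 - \<kappa>) / (\<kappa> * \<tau> * \<Omega>)) * (P - \<Xi>p)) - 1)
     else \<kappa> + \<delta> * (P - \<Xi>p))"

definition Sigma_R :: "real \<Rightarrow> real \<Rightarrow> real \<Rightarrow> real \<Rightarrow> real \<Rightarrow> real" where
  "Sigma_R \<tau> \<delta> \<kappa> \<Omega> \<Xi>p = -1 + \<kappa> - \<tau> * \<Omega> * \<delta> - \<delta> * \<Xi>p"

definition X_TW :: "real \<Rightarrow> real \<Rightarrow> real \<Rightarrow> real \<Rightarrow> real \<Rightarrow> real \<Rightarrow> real \<Rightarrow> real" where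
  "X_TW \<tau> \<delta> \<kappa> \<Omega> \<Xi>m \<Xi>p =
    (if \<Omega> < 0 then X_L \<tau> \<delta> \<kappa> \<Omega> \<Xi>m \<Xi>p else X_R \<tau> \<delta> \<kappa> \<Omega> \<Xi>m \<Xi>p)"

definition Sigma_TW :: "real \<Rightarrow> real \<Rightarrow> real \<Rightarrow> real \<Rightarrow> real \<Rightarrow> real \<Rightarrow> real" where
  "Sigma_TW \<tau> \<delta> \<kappa> \<Omega> \<Xi>m \<Xi>p =
    (if \<Omega> < 0 then Sigma_L \<tau> \<delta> \<kappa> \<Omega> \<Xi>m else Sigma_R \<tau> \<delta> \<kappa> \<Omega> \<Xi>p)"

end

theory Submission
  imports Defs
begin

lemma glue:
  fixes g h g' h' :: "real \<Rightarrow> real"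
  assumes g: "\<And>x. (g has_real_derivative g' x) (at x)"
    and h: "\<And>x. (h has_real_derivative h' x) (at x)"
    and e1: "g a = h a" and e2: "g' a = h' a"
  shows "((\<lambda>x. if x \<le> a then g x else h x) has_real_derivative (if x \<le> a then g' x else h' x)) (at x)"
proof -
  have cS: "closure {..a} = {..a}" by simp
  have cT: "closure {a<..} = {a..}" by simp
  have "((\<lambda>x. if x \<in> {..a} then g x else h x) has_vector_derivative (if x \<in> {..a} then g' x else h' x))
     (at x within UNIV)"
    apply (rule has_vector_derivative_If_within_closures[where T="{a<..}"])
    using g h e1 e2 unfolding cS cT
    by (auto simp: has_real_derivative_iff_has_vector_derivative[symmetric] intro: has_field_derivative_at_within)
  then show ?thesis by (simp add: has_real_derivative_iff_has_vector_derivative)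
qed
lemma generic:
  fixes X D :: "real \<Rightarrow> real" and \<tau> \<delta> \<kappa> \<Omega> \<Xi>m \<Xi>p \<Sigma> :: real
  assumes tau: "\<tau> > 0" and kap: "\<kappa> > 0" and Xi: "\<Xi>m < \<Xi>p"
    and der: "\<And>P. (X has_real_derivative D P) (at P)"
    and pos: "\<And>P. D P > 0"
    and Xm: "X \<Xi>m = - \<kappa>" and Xp: "X \<Xi>p = \<kappa>"
    and o1: "\<And>P. P \<le> \<Xi>m \<Longrightarrow> - \<tau> * \<Omega> * D P = \<Sigma> + \<delta> * P - (X P + 1)"
    and o2: "\<And>P. \<Xi>m < P \<Longrightarrow> P \<le> \<Xi>p \<Longrightarrow> - \<tau> * \<Omega> * D P = \<Sigma> + \<delta> * P + ((1 - \<kappa>) / \<kappa>) * X P"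
    and o3: "\<And>P. \<Xi>p < P \<Longrightarrow> - \<tau> * \<Omega> * D P = \<Sigma> + \<delta> * P - (X P - 1)"
  shows "(\<forall>t p. ((\<lambda>s. X (p - \<Omega> * s)) has_real_derivative
                   ((\<Sigma> - \<delta> * (\<Omega> * t - 1 / 2)) + \<delta> * (p - 1 / 2) - Hprime \<kappa> (X (p - \<Omega> * t))) / \<tau>) (at t))
       \<and> (\<forall>t. strict_mono (\<lambda>p. X (p - \<Omega> * t)))
       \<and> (\<forall>P. P < \<Xi>m \<longrightarrow> X P < - \<kappa>)
       \<and> (\<forall>P. \<Xi>m < P \<and> P < \<Xi>p \<longrightarrow> - \<kappa> < X P \<and> X P < \<kappa>)
       \<and> (\<forall>P. \<Xi>p < P \<longrightarrow> X P > \<kappa>)"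
proof -
  have lt: "X a < X b" if "a < b" for a b
    using DERIV_pos_imp_increasing[OF that] der pos by blast
  have le: "X a \<le> X b" if "a \<le> b" for a b
    using lt[of a b] that by (cases "a = b") auto
  have ode: "- \<tau> * \<Omega> * D P = \<Sigma> + \<delta> * P - Hprime \<kappa> (X P)" for P
  proof -
    consider "P \<le> \<Xi>m" | "\<Xi>m < P \<and> P \<le> \<Xi>p" | "\<Xi>p < P" by linarith
    then show ?thesis
    proof cases
      case 1
      then have "X P \<le> - \<kappa>" using le Xm by metis
      then show ?thesis using o1[OF 1] by (simp add: Hprime_def)
    next
      case 2
      then have "X P \<le> \<kappa>" "- \<kappa> < X P" using le lt Xm Xp by metis+
      then show ?thesis using o2 2 by (simp add: Hprime_def)
    next
      case 3
      then have "X P > \<kappa>" using lt Xp by metis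
      then show ?thesis using o3[OF 3] kap by (simp add: Hprime_def)
    qed
  qed
  have d: "((\<lambda>s. X (p - \<Omega> * s)) has_real_derivative
                   ((\<Sigma> - \<delta> * (\<Omega> * t - 1 / 2)) + \<delta> * (p - 1 / 2) - Hprime \<kappa> (X (p - \<Omega> * t))) / \<tau>) (at t)" for t p
  proof -
    have "((\<lambda>s. X (p - \<Omega> * s)) has_real_derivative D (p - \<Omega> * t) * (0 - \<Omega> * 1)) (at t)"
      by (rule DERIV_chain2[OF der]) (auto intro!: derivative_eq_intros)
    moreover have "D (p - \<Omega> * t) * (0 - \<Omega> * 1) = ((\<Sigma> - \<delta> * (\<Omega> * t - 1 / 2)) + \<delta> * (p - 1 / 2) - Hprime \<kappa> (X (p - \<Omega> * t))) / \<tau>"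
      using ode[of "p - \<Omega> * t"] tau by (simp add: field_simps)
    ultimately show ?thesis by simp
  qed
  have sm: "strict_mono (\<lambda>p. X (p - \<Omega> * t))" for t
    using lt by (auto simp: strict_mono_def)
  show ?thesis
    using d sm lt[of _ \<Xi>m] lt[of \<Xi>m] lt[of _ \<Xi>p] lt[of \<Xi>p] unfolding Xm Xp by blast
qed
lemma left_case:
  fixes \<tau> \<delta> \<kappa> \<Omega> \<Xi>m \<Xi>p :: real
  assumes tau: "\<tau> > 0" and dl: "\<delta> > 0" and k0: "0 < \<kappa>" and k1: "\<kappa> < 1"
    and Om: "\<Omega> < 0" and Xi: "\<Xi>m < \<Xi>p"
    and transc: "2 * (1 - \<kappa>)\<^sup>2 / (\<tau> * \<bar>\<Omega>\<bar> * \<delta>) + (1 - \<kappa>) / (\<tau> * \<bar>\<Omega>\<bar>) * (\<Xi>p - \<Xi>m)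
                 = exp ((1 - \<kappa>) / (\<kappa> * \<tau> * \<bar>\<Omega>\<bar>) * (\<Xi>p - \<Xi>m)) - 1"
  shows "\<exists>D. (\<forall>P. (X_L \<tau> \<delta> \<kappa> \<Omega> \<Xi>m \<Xi>p has_real_derivative D P) (at P)) \<and> (\<forall>P. D P > 0)
     \<and> X_L \<tau> \<delta> \<kappa> \<Omega> \<Xi>m \<Xi>p \<Xi>m = - \<kappa> \<and> X_L \<tau> \<delta> \<kappa> \<Omega> \<Xi>m \<Xi>p \<Xi>p = \<kappa>
     \<and> (\<forall>P. P \<le> \<Xi>m \<longrightarrow> - \<tau> * \<Omega> * D P = Sigma_L \<tau> \<delta> \<kappa> \<Omega> \<Xi>m + \<delta> * P - (X_L \<tau> \<delta> \<kappa> \<Omega> \<Xi>m \<Xi>p P + 1))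
     \<and> (\<forall>P. \<Xi>m < P \<and> P \<le> \<Xi>p \<longrightarrow> - \<tau> * \<Omega> * D P = Sigma_L \<tau> \<delta> \<kappa> \<Omega> \<Xi>m + \<delta> * P + ((1 - \<kappa>) / \<kappa>) * X_L \<tau> \<delta> \<kappa> \<Omega> \<Xi>m \<Xi>p P)
     \<and> (\<forall>P. \<Xi>p < P \<longrightarrow> - \<tau> * \<Omega> * D P = Sigma_L \<tau> \<delta> \<kappa> \<Omega> \<Xi>m + \<delta> * P - (X_L \<tau> \<delta> \<kappa> \<Omega> \<Xi>m \<Xi>p P - 1))"
proof -
  define k where "k = (1 - \<kappa>) / (\<kappa> * \<tau> * \<Omega>)"
  define C where "C = 2 * (1 - \<kappa>) + \<delta> * (\<Xi>p - \<Xi>m)"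
  define g1 where "g1 = (\<lambda>P. - \<kappa> + \<delta> * (P - \<Xi>m))"
  define g1' where "g1' = (\<lambda>P::real. \<delta>)"
  define g2 where "g2 = (\<lambda>P. - \<kappa> - (\<kappa> * \<delta> / (1 - \<kappa>)) * (P - \<Xi>m)
         - (\<kappa> * \<tau> * \<Omega> * \<delta> / (1 - \<kappa>)\<^sup>2) * (exp (- k * (P - \<Xi>m)) - 1))"
  define g2' where "g2' = (\<lambda>P. - (\<kappa> * \<delta> / (1 - \<kappa>)) + \<delta> / (1 - \<kappa>) * exp (- k * (P - \<Xi>m)))"
  define g3 where "g3 = (\<lambda>P. \<kappa> + \<delta> * (P - \<Xi>p) + C * (1 - exp ((P - \<Xi>p) / (\<tau> * \<Omega>))))"
  define g3' where "g3' = (\<lambda>P. \<delta> - C / (\<tau> * \<Omega>) * exp ((P - \<Xi>p) / (\<tau> * \<Omega>)))"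
  define G where "G = (\<lambda>P. if P \<le> \<Xi>p then g2 P else g3 P)"
  define G' where "G' = (\<lambda>P. if P \<le> \<Xi>p then g2' P else g3' P)"
  define D where "D = (\<lambda>P. if P \<le> \<Xi>m then g1' P else G' P)"
  have XL: "X_L \<tau> \<delta> \<kappa> \<Omega> \<Xi>m \<Xi>p = (\<lambda>P. if P \<le> \<Xi>m then g1 P else G P)"
    by (rule ext) (simp add: X_L_def g1_def g2_def g3_def G_def k_def C_def)
  have kne: "\<kappa> \<noteq> 0" "1 - \<kappa> \<noteq> 0" "\<tau> \<noteq> 0" "\<Omega> \<noteq> 0" "\<delta> \<noteq> 0" using k0 k1 tau Om dl by auto
  have d1: "(g1 has_real_derivative g1' P) (at P)" for P
    unfolding g1_def g1'_def by (auto intro!: derivative_eq_intros)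
  have Ak: "\<kappa> * \<tau> * \<Omega> * \<delta> / (1 - \<kappa>)\<^sup>2 * k = \<delta> / (1 - \<kappa>)"
  proof -
    have "c \<noteq> 0 \<Longrightarrow> \<kappa> * \<tau> * \<Omega> * \<delta> / c\<^sup>2 * (c / (\<kappa> * \<tau> * \<Omega>)) = \<delta> / c" for c
      using kne by (simp add: field_simps power2_eq_square)
    then show ?thesis using kne unfolding k_def by blast
  qed
  have d2: "(g2 has_real_derivative g2' P) (at P)" for P
    unfolding g2_def
    apply (rule derivative_eq_intros refl)+
    using Ak[THEN arg_cong[where f="\<lambda>z. z * exp (- k * (P - \<Xi>m))"]] by (simp add: g2'_def algebra_simps)
  have d3: "(g3 has_real_derivative g3' P) (at P)" for P
    unfolding g3_def using kne
    by (auto intro!: derivative_eq_intros simp: g3'_def field_simps)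
  define E where "E = exp (- k * (\<Xi>p - \<Xi>m))"
  have absO: "\<bar>\<Omega>\<bar> = - \<Omega>" using Om by simp
  have Eeq: "E - 1 = 2 * (1 - \<kappa>)\<^sup>2 / (\<tau> * (- \<Omega>) * \<delta>) + (1 - \<kappa>) / (\<tau> * (- \<Omega>)) * (\<Xi>p - \<Xi>m)"
  proof -
    have "- k * (\<Xi>p - \<Xi>m) = (1 - \<kappa>) / (\<kappa> * \<tau> * \<bar>\<Omega>\<bar>) * (\<Xi>p - \<Xi>m)"
      unfolding absO k_def by simp
    then show ?thesis using transc unfolding E_def absO by simp
  qed
  have g2p: "g2 \<Xi>p = \<kappa>"
  proof -
    have "g2 \<Xi>p = - \<kappa> - (\<kappa> * \<delta> / (1 - \<kappa>)) * (\<Xi>p - \<Xi>m) - (\<kappa> * \<tau> * \<Omega> * \<delta> / (1 - \<kappa>)\<^sup>2) * (E - 1)"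
      by (simp add: g2_def E_def)
    also have "\<dots> = \<kappa>" unfolding Eeq
    proof -
      have "c \<noteq> 0 \<Longrightarrow> - \<kappa> - (\<kappa> * \<delta> / c) * (\<Xi>p - \<Xi>m) - (\<kappa> * \<tau> * \<Omega> * \<delta> / c\<^sup>2) * (2 * c\<^sup>2 / (\<tau> * (- \<Omega>) * \<delta>) + c / (\<tau> * (- \<Omega>)) * (\<Xi>p - \<Xi>m)) = \<kappa>" for c
        using kne by (simp add: field_simps power2_eq_square)
      then show "- \<kappa> - (\<kappa> * \<delta> / (1 - \<kappa>)) * (\<Xi>p - \<Xi>m) - (\<kappa> * \<tau> * \<Omega> * \<delta> / (1 - \<kappa>)\<^sup>2) * (2 * (1 - \<kappa>)\<^sup>2 / (\<tau> * (- \<Omega>) * \<delta>) + (1 - \<kappa>) / (\<tau> * (- \<Omega>)) * (\<Xi>p - \<Xi>m)) = \<kappa>"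
        using kne by blast
    qed
    finally show ?thesis .
  qed
  have g3p: "g3 \<Xi>p = \<kappa>" by (simp add: g3_def)
  have g2'p: "g2' \<Xi>p = g3' \<Xi>p"
  proof -
    have "g2' \<Xi>p = - (\<kappa> * \<delta> / (1 - \<kappa>)) + \<delta> / (1 - \<kappa>) * ((E - 1) + 1)"
      by (simp add: g2'_def E_def)
    also have "\<dots> = g3' \<Xi>p" unfolding Eeq g3'_def C_def
    proof -
      have gen: "c \<noteq> 0 \<Longrightarrow> - ((1 - c) * \<delta> / c) + \<delta> / c * ((2 * c\<^sup>2 / (\<tau> * (- \<Omega>) * \<delta>) + c / (\<tau> * (- \<Omega>)) * (\<Xi>p - \<Xi>m)) + 1) = \<delta> - (2 * c + \<delta> * (\<Xi>p - \<Xi>m)) / (\<tau> * \<Omega>) * exp ((\<Xi>p - \<Xi>p) / (\<tau> * \<Omega>))" for c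
        using kne by (simp add: field_simps power2_eq_square)
      show "- (\<kappa> * \<delta> / (1 - \<kappa>)) + \<delta> / (1 - \<kappa>) * ((2 * (1 - \<kappa>)\<^sup>2 / (\<tau> * (- \<Omega>) * \<delta>) + (1 - \<kappa>) / (\<tau> * (- \<Omega>)) * (\<Xi>p - \<Xi>m)) + 1) = \<delta> - (2 * (1 - \<kappa>) + \<delta> * (\<Xi>p - \<Xi>m)) / (\<tau> * \<Omega>) * exp ((\<Xi>p - \<Xi>p) / (\<tau> * \<Omega>))"
        using kne gen[of "1 - \<kappa>"] by simp
    qed
    finally show ?thesis .
  qed
  have dG: "(G has_real_derivative G' P) (at P)" for P
    unfolding G_def G'_def by (rule glue[OF d2 d3 _ g2'p]) (simp add: g2p g3p)
  have g2m: "g2 \<Xi>m = - \<kappa>" by (simp add: g2_def)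
  have g2'm: "g2' \<Xi>m = \<delta>"
  proof -
    have gen: "c \<noteq> 0 \<Longrightarrow> - ((1 - c) * \<delta> / c) + \<delta> / c * 1 = \<delta>" for c
      by (simp add: field_simps)
    show ?thesis using gen[of "1 - \<kappa>"] kne by (simp add: g2'_def)
  qed
  have dX: "(X_L \<tau> \<delta> \<kappa> \<Omega> \<Xi>m \<Xi>p has_real_derivative D P) (at P)" for P
    unfolding XL D_def
    by (rule glue[OF d1 dG]) (use Xi kne in \<open>simp_all add: G_def G'_def g1_def g2m g1'_def g2'm\<close>)
  have pos: "D P > 0" for P
  proof -
    consider "P \<le> \<Xi>m" | "\<Xi>m < P \<and> P \<le> \<Xi>p" | "\<Xi>p < P" by linarith
    then show ?thesis
    proof cases
      case 1 then show ?thesis using dl by (simp add: D_def g1'_def)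
    next
      case 2
      have "- k > 0" using k0 k1 tau Om unfolding k_def by (simp add: divide_pos_neg mult_pos_neg)
      then have "- k * (P - \<Xi>m) \<ge> 0" using 2 by (intro mult_nonneg_nonneg) auto
      then have e: "exp (- k * (P - \<Xi>m)) \<ge> 1" by simp
      have "g2' P = \<delta> / (1 - \<kappa>) * (exp (- k * (P - \<Xi>m)) - \<kappa>)"
        unfolding g2'_def by (simp add: algebra_simps)
      moreover have "\<delta> / (1 - \<kappa>) * (exp (- k * (P - \<Xi>m)) - \<kappa>) > 0"
      proof -
        have "exp (- k * (P - \<Xi>m)) - \<kappa> > 0" using e k1 by linarith
        then show ?thesis using k1 dl by (intro mult_pos_pos) auto
      qed
      ultimately show ?thesis using 2 by (simp add: D_def G'_def)
    next
      case 3
      have "C > 0" unfolding C_def using k1 dl Xi by (simp add: add_pos_pos)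
      then have "- C / (\<tau> * \<Omega>) > 0" using tau Om by (simp add: divide_pos_neg mult_pos_neg)
      then have "- C / (\<tau> * \<Omega>) * exp ((P - \<Xi>p) / (\<tau> * \<Omega>)) > 0" by (intro mult_pos_pos) auto
      then have "g3' P > 0" unfolding g3'_def using dl by simp
      then show ?thesis using 3 Xi by (simp add: D_def G'_def)
    qed
  qed
  have o1: "- \<tau> * \<Omega> * D P = Sigma_L \<tau> \<delta> \<kappa> \<Omega> \<Xi>m + \<delta> * P - (X_L \<tau> \<delta> \<kappa> \<Omega> \<Xi>m \<Xi>p P + 1)" if "P \<le> \<Xi>m" for P
    using that by (simp add: XL D_def g1_def g1'_def Sigma_L_def algebra_simps)
  have o2: "- \<tau> * \<Omega> * D P = Sigma_L \<tau> \<delta> \<kappa> \<Omega> \<Xi>m + \<delta> * P + ((1 - \<kappa>) / \<kappa>) * X_L \<tau> \<delta> \<kappa> \<Omega> \<Xi>m \<Xi>p P" if "\<Xi>m < P \<and> P \<le> \<Xi>p" for P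
  proof -
    have "c \<noteq> 0 \<Longrightarrow> - \<tau> * \<Omega> * (- ((1 - c) * \<delta> / c) + \<delta> / c * e) = (c - \<tau> * \<Omega> * \<delta> - \<delta> * \<Xi>m) + \<delta> * P
       + (c / \<kappa>) * (- \<kappa> - (\<kappa> * \<delta> / c) * (P - \<Xi>m) - (\<kappa> * \<tau> * \<Omega> * \<delta> / c\<^sup>2) * (e - 1))" for c e
      using kne by (simp add: field_simps power2_eq_square)
    from this[of "1 - \<kappa>" "exp (- k * (P - \<Xi>m))"] show ?thesis
      using that kne by (simp add: XL D_def G_def G'_def g2_def g2'_def Sigma_L_def)
  qed
  have o3: "- \<tau> * \<Omega> * D P = Sigma_L \<tau> \<delta> \<kappa> \<Omega> \<Xi>m + \<delta> * P - (X_L \<tau> \<delta> \<kappa> \<Omega> \<Xi>m \<Xi>p P - 1)" if "\<Xi>p < P" for P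
    using that Xi kne by (simp add: XL D_def G_def G'_def g3_def g3'_def C_def Sigma_L_def field_simps)
  show ?thesis
    apply (rule exI[of _ D])
    using dX pos o1 o2 o3 g2p g2m Xi by (simp add: XL G_def g1_def)
qed

lemma right_case:
  fixes \<tau> \<delta> \<kappa> \<Omega> \<Xi>m \<Xi>p :: real
  assumes tau: "\<tau> > 0" and dl: "\<delta> > 0" and k0: "0 < \<kappa>" and k1: "\<kappa> < 1"
    and Om: "\<Omega> > 0" and Xi: "\<Xi>m < \<Xi>p"
    and transc: "2 * (1 - \<kappa>)\<^sup>2 / (\<tau> * \<bar>\<Omega>\<bar> * \<delta>) + (1 - \<kappa>) / (\<tau> * \<bar>\<Omega>\<bar>) * (\<Xi>p - \<Xi>m)
                 = exp ((1 - \<kappa>) / (\<kappa> * \<tau> * \<bar>\<Omega>\<bar>) * (\<Xi>p - \<Xi>m)) - 1"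
  shows "\<exists>D. (\<forall>P. (X_R \<tau> \<delta> \<kappa> \<Omega> \<Xi>m \<Xi>p has_real_derivative D P) (at P)) \<and> (\<forall>P. D P > 0)
     \<and> X_R \<tau> \<delta> \<kappa> \<Omega> \<Xi>m \<Xi>p \<Xi>m = - \<kappa> \<and> X_R \<tau> \<delta> \<kappa> \<Omega> \<Xi>m \<Xi>p \<Xi>p = \<kappa>
     \<and> (\<forall>P. P \<le> \<Xi>m \<longrightarrow> - \<tau> * \<Omega> * D P = Sigma_R \<tau> \<delta> \<kappa> \<Omega> \<Xi>p + \<delta> * P - (X_R \<tau> \<delta> \<kappa> \<Omega> \<Xi>m \<Xi>p P + 1))
     \<and> (\<forall>P. \<Xi>m < P \<and> P \<le> \<Xi>p \<longrightarrow> - \<tau> * \<Omega> * D P = Sigma_R \<tau> \<delta> \<kappa> \<Omega> \<Xi>p + \<delta> * P + ((1 - \<kappa>) / \<kappa>) * X_R \<tau> \<delta> \<kappa> \<Omega> \<Xi>m \<Xi>p P)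
     \<and> (\<forall>P. \<Xi>p < P \<longrightarrow> - \<tau> * \<Omega> * D P = Sigma_R \<tau> \<delta> \<kappa> \<Omega> \<Xi>p + \<delta> * P - (X_R \<tau> \<delta> \<kappa> \<Omega> \<Xi>m \<Xi>p P - 1))"
proof -
  define k where "k = (1 - \<kappa>) / (\<kappa> * \<tau> * \<Omega>)"
  define C where "C = 2 * (1 - \<kappa>) + \<delta> * (\<Xi>p - \<Xi>m)"
  define g1 where "g1 = (\<lambda>P. - \<kappa> + \<delta> * (P - \<Xi>m) + C * (-1 + exp ((P - \<Xi>m) / (\<tau> * \<Omega>))))"
  define g1' where "g1' = (\<lambda>P. \<delta> + C / (\<tau> * \<Omega>) * exp ((P - \<Xi>m) / (\<tau> * \<Omega>)))"
  define g2 where "g2 = (\<lambda>P. \<kappa> - (\<kappa> * \<delta> / (1 - \<kappa>)) * (P - \<Xi>p)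
         - (\<kappa> * \<tau> * \<Omega> * \<delta> / (1 - \<kappa>)\<^sup>2) * (exp (- k * (P - \<Xi>p)) - 1))"
  define g2' where "g2' = (\<lambda>P. - (\<kappa> * \<delta> / (1 - \<kappa>)) + \<delta> / (1 - \<kappa>) * exp (- k * (P - \<Xi>p)))"
  define g3 where "g3 = (\<lambda>P. \<kappa> + \<delta> * (P - \<Xi>p))"
  define g3' where "g3' = (\<lambda>P::real. \<delta>)"
  define G where "G = (\<lambda>P. if P \<le> \<Xi>p then g2 P else g3 P)"
  define G' where "G' = (\<lambda>P. if P \<le> \<Xi>p then g2' P else g3' P)"
  define D where "D = (\<lambda>P. if P \<le> \<Xi>m then g1' P else G' P)"
  have XR: "X_R \<tau> \<delta> \<kappa> \<Omega> \<Xi>m \<Xi>p = (\<lambda>P. if P \<le> \<Xi>m then g1 P else G P)"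
    by (rule ext) (simp add: X_R_def g1_def g2_def g3_def G_def k_def C_def)
  have kne: "\<kappa> \<noteq> 0" "1 - \<kappa> \<noteq> 0" "\<tau> \<noteq> 0" "\<Omega> \<noteq> 0" "\<delta> \<noteq> 0" using k0 k1 tau Om dl by auto
  have d1: "(g1 has_real_derivative g1' P) (at P)" for P
    unfolding g1_def using kne
    by (auto intro!: derivative_eq_intros simp: g1'_def field_simps)
  have Ak: "\<kappa> * \<tau> * \<Omega> * \<delta> / (1 - \<kappa>)\<^sup>2 * k = \<delta> / (1 - \<kappa>)"
  proof -
    have "c \<noteq> 0 \<Longrightarrow> \<kappa> * \<tau> * \<Omega> * \<delta> / c\<^sup>2 * (c / (\<kappa> * \<tau> * \<Omega>)) = \<delta> / c" for c
      using kne by (simp add: field_simps power2_eq_square)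
    then show ?thesis using kne unfolding k_def by blast
  qed
  have d2: "(g2 has_real_derivative g2' P) (at P)" for P
    unfolding g2_def
    apply (rule derivative_eq_intros refl)+
    using Ak[THEN arg_cong[where f="\<lambda>z. z * exp (- k * (P - \<Xi>p))"]] by (simp add: g2'_def algebra_simps)
  have d3: "(g3 has_real_derivative g3' P) (at P)" for P
    unfolding g3_def g3'_def by (auto intro!: derivative_eq_intros)
  define E where "E = exp (- k * (\<Xi>m - \<Xi>p))"
  have absO: "\<bar>\<Omega>\<bar> = \<Omega>" using Om by simp
  have Eeq: "E - 1 = 2 * (1 - \<kappa>)\<^sup>2 / (\<tau> * \<Omega> * \<delta>) + (1 - \<kappa>) / (\<tau> * \<Omega>) * (\<Xi>p - \<Xi>m)"
  proof -
    have "- k * (\<Xi>m - \<Xi>p) = (1 - \<kappa>) / (\<kappa> * \<tau> * \<bar>\<Omega>\<bar>) * (\<Xi>p - \<Xi>m)"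
      unfolding absO k_def by (metis minus_diff_eq mult_minus_left mult_minus_right)
    then show ?thesis using transc unfolding E_def absO by simp
  qed
  have g2m: "g2 \<Xi>m = - \<kappa>"
  proof -
    have "g2 \<Xi>m = \<kappa> + (\<kappa> * \<delta> / (1 - \<kappa>)) * (\<Xi>p - \<Xi>m) - (\<kappa> * \<tau> * \<Omega> * \<delta> / (1 - \<kappa>)\<^sup>2) * (E - 1)"
    proof -
      have "(\<kappa> * \<delta> / (1 - \<kappa>)) * (\<Xi>m - \<Xi>p) = - ((\<kappa> * \<delta> / (1 - \<kappa>)) * (\<Xi>p - \<Xi>m))"
        by (metis minus_diff_eq mult_minus_right)
      then show ?thesis by (simp add: g2_def E_def)
    qed
    also have "\<dots> = - \<kappa>" unfolding Eeq
    proof -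
      have "c \<noteq> 0 \<Longrightarrow> \<kappa> + (\<kappa> * \<delta> / c) * (\<Xi>p - \<Xi>m) - (\<kappa> * \<tau> * \<Omega> * \<delta> / c\<^sup>2) * (2 * c\<^sup>2 / (\<tau> * \<Omega> * \<delta>) + c / (\<tau> * \<Omega>) * (\<Xi>p - \<Xi>m)) = - \<kappa>" for c
        using kne by (simp add: field_simps power2_eq_square)
      then show "\<kappa> + (\<kappa> * \<delta> / (1 - \<kappa>)) * (\<Xi>p - \<Xi>m) - (\<kappa> * \<tau> * \<Omega> * \<delta> / (1 - \<kappa>)\<^sup>2) * (2 * (1 - \<kappa>)\<^sup>2 / (\<tau> * \<Omega> * \<delta>) + (1 - \<kappa>) / (\<tau> * \<Omega>) * (\<Xi>p - \<Xi>m)) = - \<kappa>"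
        using kne by blast
    qed
    finally show ?thesis .
  qed
  have g1m: "g1 \<Xi>m = - \<kappa>" by (simp add: g1_def)
  have g2'm: "g2' \<Xi>m = g1' \<Xi>m"
  proof -
    have "g2' \<Xi>m = - (\<kappa> * \<delta> / (1 - \<kappa>)) + \<delta> / (1 - \<kappa>) * ((E - 1) + 1)"
      by (simp add: g2'_def E_def)
    also have "\<dots> = g1' \<Xi>m" unfolding Eeq g1'_def C_def
    proof -
      have gen: "c \<noteq> 0 \<Longrightarrow> - ((1 - c) * \<delta> / c) + \<delta> / c * ((2 * c\<^sup>2 / (\<tau> * \<Omega> * \<delta>) + c / (\<tau> * \<Omega>) * (\<Xi>p - \<Xi>m)) + 1) = \<delta> + (2 * c + \<delta> * (\<Xi>p - \<Xi>m)) / (\<tau> * \<Omega>) * exp ((\<Xi>m - \<Xi>m) / (\<tau> * \<Omega>))" for c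
        using kne by (simp add: field_simps power2_eq_square)
      show "- (\<kappa> * \<delta> / (1 - \<kappa>)) + \<delta> / (1 - \<kappa>) * ((2 * (1 - \<kappa>)\<^sup>2 / (\<tau> * \<Omega> * \<delta>) + (1 - \<kappa>) / (\<tau> * \<Omega>) * (\<Xi>p - \<Xi>m)) + 1) = \<delta> + (2 * (1 - \<kappa>) + \<delta> * (\<Xi>p - \<Xi>m)) / (\<tau> * \<Omega>) * exp ((\<Xi>m - \<Xi>m) / (\<tau> * \<Omega>))"
        using kne gen[of "1 - \<kappa>"] by simp
    qed
    finally show ?thesis .
  qed
  have g2'p: "g2' \<Xi>p = \<delta>"
  proof -
    have gen: "c \<noteq> 0 \<Longrightarrow> - ((1 - c) * \<delta> / c) + \<delta> / c * 1 = \<delta>" for c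
      by (simp add: field_simps)
    show ?thesis using gen[of "1 - \<kappa>"] kne by (simp add: g2'_def)
  qed
  have dG: "(G has_real_derivative G' P) (at P)" for P
    unfolding G_def G'_def by (rule glue[OF d2 d3]) (simp_all add: g2_def g3_def g3'_def g2'p)
  have dX: "(X_R \<tau> \<delta> \<kappa> \<Omega> \<Xi>m \<Xi>p has_real_derivative D P) (at P)" for P
    unfolding XR D_def
    by (rule glue[OF d1 dG]) (use Xi kne in \<open>simp_all add: G_def G'_def g1m g2m g2'm\<close>)
  have pos: "D P > 0" for P
  proof -
    consider "P \<le> \<Xi>m" | "\<Xi>m < P \<and> P \<le> \<Xi>p" | "\<Xi>p < P" by linarith
    then show ?thesis
    proof cases
      case 1
      have "C > 0" unfolding C_def using k1 dl Xi by (simp add: add_pos_pos)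
      then have "C / (\<tau> * \<Omega>) > 0" using tau Om by simp
      then have "C / (\<tau> * \<Omega>) * exp ((P - \<Xi>m) / (\<tau> * \<Omega>)) > 0" by (intro mult_pos_pos) auto
      then have "g1' P > 0" unfolding g1'_def using dl by simp
      then show ?thesis using 1 by (simp add: D_def)
    next
      case 2
      have "k > 0" using k0 k1 tau Om unfolding k_def by simp
      then have "- k * (P - \<Xi>p) \<ge> 0" using 2 by (simp add: mult_nonneg_nonpos)
      then have e: "exp (- k * (P - \<Xi>p)) \<ge> 1" by simp
      have "g2' P = \<delta> / (1 - \<kappa>) * (exp (- k * (P - \<Xi>p)) - \<kappa>)"
        unfolding g2'_def by (simp add: algebra_simps)
      moreover have "\<delta> / (1 - \<kappa>) * (exp (- k * (P - \<Xi>p)) - \<kappa>) > 0"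
      proof -
        have "exp (- k * (P - \<Xi>p)) - \<kappa> > 0" using e k1 by linarith
        then show ?thesis using k1 dl by (intro mult_pos_pos) auto
      qed
      ultimately show ?thesis using 2 by (simp add: D_def G'_def)
    next
      case 3
      then show ?thesis using Xi dl by (simp add: D_def G'_def g3'_def)
    qed
  qed
  have o1: "- \<tau> * \<Omega> * D P = Sigma_R \<tau> \<delta> \<kappa> \<Omega> \<Xi>p + \<delta> * P - (X_R \<tau> \<delta> \<kappa> \<Omega> \<Xi>m \<Xi>p P + 1)" if "P \<le> \<Xi>m" for P
    using that kne by (simp add: XR D_def g1_def g1'_def C_def Sigma_R_def field_simps)
  have o2: "- \<tau> * \<Omega> * D P = Sigma_R \<tau> \<delta> \<kappa> \<Omega> \<Xi>p + \<delta> * P + ((1 - \<kappa>) / \<kappa>) * X_R \<tau> \<delta> \<kappa> \<Omega> \<Xi>m \<Xi>p P" if "\<Xi>m < P \<and> P \<le> \<Xi>p" for P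
  proof -
    have "c \<noteq> 0 \<Longrightarrow> - \<tau> * \<Omega> * (- ((1 - c) * \<delta> / c) + \<delta> / c * e) = (- c - \<tau> * \<Omega> * \<delta> - \<delta> * \<Xi>p) + \<delta> * P
       + (c / \<kappa>) * (\<kappa> - (\<kappa> * \<delta> / c) * (P - \<Xi>p) - (\<kappa> * \<tau> * \<Omega> * \<delta> / c\<^sup>2) * (e - 1))" for c e
      using kne by (simp add: field_simps power2_eq_square)
    from this[of "1 - \<kappa>" "exp (- k * (P - \<Xi>p))"] show ?thesis
      using that kne by (simp add: XR D_def G_def G'_def g2_def g2'_def Sigma_R_def)
  qed
  have o3: "- \<tau> * \<Omega> * D P = Sigma_R \<tau> \<delta> \<kappa> \<Omega> \<Xi>p + \<delta> * P - (X_R \<tau> \<delta> \<kappa> \<Omega> \<Xi>m \<Xi>p P - 1)" if "\<Xi>p < P" for P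
    using that Xi by (simp add: XR D_def G_def G'_def g3_def g3'_def Sigma_R_def algebra_simps)
  show ?thesis
    apply (rule exI[of _ D])
    using dX pos o1 o2 o3 g1m g2m Xi by (simp add: XR G_def g3_def g2_def)
qed

theorem theorem2p1:
  fixes \<tau> \<delta> \<kappa> \<Omega> \<Xi>m \<Xi>p :: real
  assumes tau_pos: "\<tau> > 0" and delta_pos: "\<delta> > 0"
    and kappa: "0 < \<kappa>" "\<kappa> < 1"
    and Omega_ne: "\<Omega> \<noteq> 0"
    and Xi_lt: "\<Xi>m < \<Xi>p"
    and transc: "2 * (1 - \<kappa>)\<^sup>2 / (\<tau> * \<bar>\<Omega>\<bar> * \<delta>) + (1 - \<kappa>) / (\<tau> * \<bar>\<Omega>\<bar>) * (\<Xi>p - \<Xi>m)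
                 = exp ((1 - \<kappa>) / (\<kappa> * \<tau> * \<bar>\<Omega>\<bar>) * (\<Xi>p - \<Xi>m)) - 1"
  defines "x \<equiv> (\<lambda>t p. X_TW \<tau> \<delta> \<kappa> \<Omega> \<Xi>m \<Xi>p (p - \<Omega> * t))"
    and "\<sigma> \<equiv> (\<lambda>t. Sigma_TW \<tau> \<delta> \<kappa> \<Omega> \<Xi>m \<Xi>p - \<delta> * (\<Omega> * t - 1 / 2))"
  shows "(\<forall>t p. ((\<lambda>s. x s p) has_real_derivative
                   (\<sigma> t + \<delta> * (p - 1 / 2) - Hprime \<kappa> (x t p)) / \<tau>) (at t))
       \<and> (\<forall>t. strict_mono (\<lambda>p. x t p))
       \<and> (\<forall>P. P < \<Xi>m \<longrightarrow> X_TW \<tau> \<delta> \<kappa> \<Omega> \<Xi>m \<Xi>p P < - \<kappa>)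
       \<and> (\<forall>P. \<Xi>m < P \<and> P < \<Xi>p \<longrightarrow> - \<kappa> < X_TW \<tau> \<delta> \<kappa> \<Omega> \<Xi>m \<Xi>p P \<and> X_TW \<tau> \<delta> \<kappa> \<Omega> \<Xi>m \<Xi>p P < \<kappa>)
       \<and> (\<forall>P. \<Xi>p < P \<longrightarrow> X_TW \<tau> \<delta> \<kappa> \<Omega> \<Xi>m \<Xi>p P > \<kappa>)"
proof (cases "\<Omega> < 0")
  case True
  from left_case[OF tau_pos delta_pos kappa True Xi_lt transc] obtain D where
    h: "\<forall>P. (X_L \<tau> \<delta> \<kappa> \<Omega> \<Xi>m \<Xi>p has_real_derivative D P) (at P)" "\<forall>P. D P > 0"
     "X_L \<tau> \<delta> \<kappa> \<Omega> \<Xi>m \<Xi>p \<Xi>m = - \<kappa>" "X_L \<tau> \<delta> \<kappa> \<Omega> \<Xi>m \<Xi>p \<Xi>p = \<kappa>"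
     "\<forall>P. P \<le> \<Xi>m \<longrightarrow> - \<tau> * \<Omega> * D P = Sigma_L \<tau> \<delta> \<kappa> \<Omega> \<Xi>m + \<delta> * P - (X_L \<tau> \<delta> \<kappa> \<Omega> \<Xi>m \<Xi>p P + 1)"
     "\<forall>P. \<Xi>m < P \<and> P \<le> \<Xi>p \<longrightarrow> - \<tau> * \<Omega> * D P = Sigma_L \<tau> \<delta> \<kappa> \<Omega> \<Xi>m + \<delta> * P + ((1 - \<kappa>) / \<kappa>) * X_L \<tau> \<delta> \<kappa> \<Omega> \<Xi>m \<Xi>p P"
     "\<forall>P. \<Xi>p < P \<longrightarrow> - \<tau> * \<Omega> * D P = Sigma_L \<tau> \<delta> \<kappa> \<Omega> \<Xi>m + \<delta> * P - (X_L \<tau> \<delta> \<kappa> \<Omega> \<Xi>m \<Xi>p P - 1)"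
    by blast
  have g: ?thesis if "\<And>P. X_TW \<tau> \<delta> \<kappa> \<Omega> \<Xi>m \<Xi>p P = X_L \<tau> \<delta> \<kappa> \<Omega> \<Xi>m \<Xi>p P"
    "Sigma_TW \<tau> \<delta> \<kappa> \<Omega> \<Xi>m \<Xi>p = Sigma_L \<tau> \<delta> \<kappa> \<Omega> \<Xi>m"
    using generic[OF tau_pos kappa(1) Xi_lt, of "X_L \<tau> \<delta> \<kappa> \<Omega> \<Xi>m \<Xi>p" D \<Omega> "Sigma_L \<tau> \<delta> \<kappa> \<Omega> \<Xi>m" \<delta>] h
    unfolding x_def \<sigma>_def that by blast
  show ?thesis by (rule g) (simp_all add: X_TW_def Sigma_TW_def True)
next
  case False
  then have Om: "\<Omega> > 0" using Omega_ne by linarith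
  from right_case[OF tau_pos delta_pos kappa Om Xi_lt transc] obtain D where
    h: "\<forall>P. (X_R \<tau> \<delta> \<kappa> \<Omega> \<Xi>m \<Xi>p has_real_derivative D P) (at P)" "\<forall>P. D P > 0"
     "X_R \<tau> \<delta> \<kappa> \<Omega> \<Xi>m \<Xi>p \<Xi>m = - \<kappa>" "X_R \<tau> \<delta> \<kappa> \<Omega> \<Xi>m \<Xi>p \<Xi>p = \<kappa>"
     "\<forall>P. P \<le> \<Xi>m \<longrightarrow> - \<tau> * \<Omega> * D P = Sigma_R \<tau> \<delta> \<kappa> \<Omega> \<Xi>p + \<delta> * P - (X_R \<tau> \<delta> \<kappa> \<Omega> \<Xi>m \<Xi>p P + 1)"
     "\<forall>P. \<Xi>m < P \<and> P \<le> \<Xi>p \<longrightarrow> - \<tau> * \<Omega> * D P = Sigma_R \<tau> \<delta> \<kappa> \<Omega> \<Xi>p + \<delta> * P + ((1 - \<kappa>) / \<kappa>) * X_R \<tau> \<delta> \<kappa> \<Omega> \<Xi>m \<Xi>p P"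
     "\<forall>P. \<Xi>p < P \<longrightarrow> - \<tau> * \<Omega> * D P = Sigma_R \<tau> \<delta> \<kappa> \<Omega> \<Xi>p + \<delta> * P - (X_R \<tau> \<delta> \<kappa> \<Omega> \<Xi>m \<Xi>p P - 1)"
    by blast
  have g: ?thesis if "\<And>P. X_TW \<tau> \<delta> \<kappa> \<Omega> \<Xi>m \<Xi>p P = X_R \<tau> \<delta> \<kappa> \<Omega> \<Xi>m \<Xi>p P"
    "Sigma_TW \<tau> \<delta> \<kappa> \<Omega> \<Xi>m \<Xi>p = Sigma_R \<tau> \<delta> \<kappa> \<Omega> \<Xi>p"
    using generic[OF tau_pos kappa(1) Xi_lt, of "X_R \<tau> \<delta> \<kappa> \<Omega> \<Xi>m \<Xi>p" D \<Omega> "Sigma_R \<tau> \<delta> \<kappa> \<Omega> \<Xi>p" \<delta>] h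
    unfolding x_def \<sigma>_def that by blast
  show ?thesis by (rule g) (simp_all add: X_TW_def Sigma_TW_def False)
qed

end
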